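(* Let $K$ be a field of characteristic zero and $n\geq 2$. If $\sigma$ is a Lie algebra automorphism of $\mathfrak{Div}_n^c$ such that $\sigma(\partial)=\partial$ for all $\partial\in\mathfrak{Div}_n^0$, then $\sigma$ is the identity.
   Context: $S_n=K[[x_1,\ldots,x_n]]$, $\partial_i=\partial/\partial x_i$, and $\operatorname{Der}_K(S_n)=\bigoplus_i S_n\partial_i$ is the Lie algebra of $K$-derivations of $S_n$ with the commutator bracket. For $\partial=\sum_i a_i\partial_i$, $\operatorname{div}(\partial)=\sum_i\partial a_i/\partial x_i$. $\mathfrak{Div}_n^0=\{\partial\in\operatorname{Der}_K(S_n)\mid\operatorname{div}(\partial)=0\}$ and $\mathfrak{Div}_n^c=\{\partial\in\operatorname{Der}_K(S_n)\mid\operatorname{div}(\partial)\in K\}$. *)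

theory Defs
  imports Main
begin

text \<open>Formal power series in n variables x_0..x_{n-1} over K are represented by their
coefficient functions on multi-indices alpha :: nat => nat (with alpha i = 0 for i >= n).\<close>

type_synonym 'k ps = "(nat \<Rightarrow> nat) \<Rightarrow> 'k"
type_synonym 'k der = "nat \<Rightarrow> 'k ps"

definition multi_idx :: "nat \<Rightarrow> (nat \<Rightarrow> nat) set" where
  "multi_idx n = {\<alpha>. \<forall>i\<ge>n. \<alpha> i = 0}"

definition PS :: "nat \<Rightarrow> 'k::zero ps set" where
  "PS n = {f. \<forall>\<alpha>. \<alpha> \<notin> multi_idx n \<longrightarrow> f \<alpha> = 0}"

definition ps_mult :: "'k::comm_ring_1 ps \<Rightarrow> 'k ps \<Rightarrow> 'k ps" where
  "ps_mult f g = (\<lambda>\<alpha>. \<Sum>\<beta>\<in>{\<beta>. \<beta> \<le> \<alpha>}. f \<beta> * g (\<lambda>i. \<alpha> i - \<beta> i))"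

definition ps_pderiv :: "nat \<Rightarrow> 'k::comm_ring_1 ps \<Rightarrow> 'k ps" where
  "ps_pderiv i f = (\<lambda>\<alpha>. of_nat (\<alpha> i + 1) * f (\<alpha>(i := \<alpha> i + 1)))"

text \<open>A derivation sum_i a_i d_i is represented by its coefficient family a.\<close>
definition Der :: "nat \<Rightarrow> 'k::zero der set" where
  "Der n = {a. (\<forall>i. a i \<in> PS n) \<and> (\<forall>i\<ge>n. a i = (\<lambda>_. 0))}"

definition apply_der :: "nat \<Rightarrow> 'k::comm_ring_1 der \<Rightarrow> 'k ps \<Rightarrow> 'k ps" where
  "apply_der n a f = (\<lambda>\<alpha>. \<Sum>i<n. ps_mult (a i) (ps_pderiv i f) \<alpha>)"

definition der_bracket :: "nat \<Rightarrow> 'k::comm_ring_1 der \<Rightarrow> 'k der \<Rightarrow> 'k der" where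
  "der_bracket n a b = (\<lambda>j \<alpha>. apply_der n a (b j) \<alpha> - apply_der n b (a j) \<alpha>)"

definition der_add :: "'k::plus der \<Rightarrow> 'k der \<Rightarrow> 'k der" where
  "der_add a b = (\<lambda>i \<alpha>. a i \<alpha> + b i \<alpha>)"

definition der_scale :: "'k::times \<Rightarrow> 'k der \<Rightarrow> 'k der" where
  "der_scale c a = (\<lambda>i \<alpha>. c * a i \<alpha>)"

definition der_div :: "nat \<Rightarrow> 'k::comm_ring_1 der \<Rightarrow> 'k ps" where
  "der_div n a = (\<lambda>\<alpha>. \<Sum>i<n. ps_pderiv i (a i) \<alpha>)"

definition ps_const :: "'k::zero \<Rightarrow> 'k ps" where
  "ps_const c = (\<lambda>\<alpha>. if \<alpha> = (\<lambda>_. 0) then c else 0)"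

definition Div0 :: "nat \<Rightarrow> 'k::comm_ring_1 der set" where
  "Div0 n = {a \<in> Der n. der_div n a = (\<lambda>_. 0)}"

definition Divc :: "nat \<Rightarrow> 'k::comm_ring_1 der set" where
  "Divc n = {a \<in> Der n. \<exists>c. der_div n a = ps_const c}"

definition Divc_aut :: "nat \<Rightarrow> ('k::comm_ring_1 der \<Rightarrow> 'k der) \<Rightarrow> bool" where
  "Divc_aut n \<sigma> \<longleftrightarrow> bij_betw \<sigma> (Divc n) (Divc n) \<and>
     (\<forall>a\<in>Divc n. \<forall>b\<in>Divc n. \<sigma> (der_add a b) = der_add (\<sigma> a) (\<sigma> b)) \<and>
     (\<forall>c. \<forall>a\<in>Divc n. \<sigma> (der_scale c a) = der_scale c (\<sigma> a)) \<and>
     (\<forall>a\<in>Divc n. \<forall>b\<in>Divc n. \<sigma> (der_bracket n a b) = der_bracket n (\<sigma> a) (\<sigma> b))"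

end

theory Submission
  imports Defs
begin

definition sd :: "nat \<Rightarrow> 'k::zero ps \<Rightarrow> 'k der" where
  "sd j f = (\<lambda>i. if i = j then f else (\<lambda>_. 0))"

definition X :: "nat \<Rightarrow> 'k::{zero,one} ps" where
  "X j = (\<lambda>\<alpha>. if \<alpha> = (\<lambda>_. 0)(j := 1) then 1 else 0)"

lemma fin_le:
  assumes "\<alpha> \<in> multi_idx N"
  shows "finite {\<beta>. \<beta> \<le> (\<alpha>::nat\<Rightarrow>nat)}"
proof -
  define M where "M = (\<Sum>i<N. \<alpha> i)"
  let ?L = "{xs. set xs \<subseteq> {..M} \<and> length xs = N}"
  have fL: "finite ?L" by (rule finite_lists_length_eq) simp
  have "{\<beta>. \<beta> \<le> \<alpha>} \<subseteq> (\<lambda>xs i. if i < N then xs ! i else 0) ` ?L"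
  proof
    fix \<beta> assume b: "\<beta> \<in> {\<beta>. \<beta> \<le> \<alpha>}"
    hence ble0: "\<beta> \<le> \<alpha>" by (rule CollectD)
    have ble: "\<beta> i \<le> \<alpha> i" for i using le_funD[OF ble0] .
    have z: "\<beta> i = 0" if "i \<ge> N" for i
    proof -
      have "\<alpha> i = 0" using assms that unfolding multi_idx_def by auto
      thus ?thesis using ble[of i] by simp
    qed
    have "\<And>i. i < N \<Longrightarrow> \<beta> i \<le> M"
    proof -
      fix i assume "i < N"
      hence "\<alpha> i \<le> M" unfolding M_def by (intro member_le_sum) auto
      thus "\<beta> i \<le> M" using ble[of i] by linarith
    qed
    hence "map \<beta> [0..<N] \<in> ?L" by auto
    moreover have "\<beta> = (\<lambda>i. if i < N then map \<beta> [0..<N] ! i else 0)"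
      using z by (auto simp: fun_eq_iff)
    ultimately show "\<beta> \<in> (\<lambda>xs i. if i < N then xs ! i else 0) ` ?L" by (rule image_eqI[rotated])
  qed
  thus ?thesis by (rule finite_subset) (rule finite_imageI[OF fL])
qed

lemma le_zero_fun: "{\<beta>. \<beta> \<le> (\<lambda>_::nat. 0::nat)} = {\<lambda>_. 0}"
proof (intro set_eqI iffI)
  fix \<beta> :: "nat \<Rightarrow> nat" assume "\<beta> \<in> {\<beta>. \<beta> \<le> (\<lambda>_. 0)}"
  hence le: "\<beta> \<le> (\<lambda>_. 0)" by (rule CollectD)
  have "\<beta> = (\<lambda>_. 0)"
  proof
    fix i show "\<beta> i = 0" using le_funD[OF le, of i] by (rule le_0_eq[THEN iffD1])
  qed
  thus "\<beta> \<in> {\<lambda>_. 0}" by blast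
next
  fix \<beta> :: "nat \<Rightarrow> nat" assume "\<beta> \<in> {\<lambda>_. 0}"
  hence "\<beta> = (\<lambda>_. 0)" by (rule singletonD)
  thus "\<beta> \<in> {\<beta>. \<beta> \<le> (\<lambda>_. 0)}" by blast
qed

lemma ps_mult_at0: "ps_mult f g (\<lambda>_. 0) = f (\<lambda>_. 0) * g (\<lambda>_. 0)"
  unfolding ps_mult_def le_zero_fun by simp

lemma ps_mult_zero_left[simp]: "ps_mult (\<lambda>_. 0) g = (\<lambda>_. 0)"
  unfolding ps_mult_def by simp

lemma ps_mult_zero_right[simp]: "ps_mult f (\<lambda>_. 0) = (\<lambda>_. 0)"
  unfolding ps_mult_def by simp

lemma ps_mult_const_left:
  assumes "g \<in> PS N"
  shows "ps_mult (ps_const c) g = (\<lambda>\<alpha>. c * g \<alpha>)"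
proof
  fix \<alpha> :: "nat \<Rightarrow> nat"
  show "ps_mult (ps_const c) g \<alpha> = c * g \<alpha>"
  proof (cases "\<alpha> \<in> multi_idx N")
    case True
    have "ps_mult (ps_const c) g \<alpha> =
      (\<Sum>\<beta>\<in>{\<beta>. \<beta> \<le> \<alpha>}. if \<beta> = (\<lambda>_. 0) then c * g (\<lambda>i. \<alpha> i - \<beta> i) else 0)"
      unfolding ps_mult_def ps_const_def by (intro sum.cong) auto
    also have "\<dots> = c * g \<alpha>" using fin_le[OF True]
      by (simp add: le_fun_def)
    finally show ?thesis .
  next
    case False
    hence "g \<alpha> = 0" using assms unfolding PS_def by auto
    moreover have "ps_mult (ps_const c) g \<alpha> = 0"
    proof (cases "finite {\<beta>. \<beta> \<le> \<alpha>}")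
      case True
      have "ps_mult (ps_const c) g \<alpha> =
        (\<Sum>\<beta>\<in>{\<beta>. \<beta> \<le> \<alpha>}. if \<beta> = (\<lambda>_. 0) then c * g (\<lambda>i. \<alpha> i - \<beta> i) else 0)"
        unfolding ps_mult_def ps_const_def by (intro sum.cong) auto
      also have "\<dots> = c * g \<alpha>" using True
        by (simp add: le_fun_def)
      finally show ?thesis using \<open>g \<alpha> = 0\<close> by simp
    qed (simp add: ps_mult_def)
    ultimately show ?thesis by simp
  qed
qed

lemma ps_mult_one_right:
  assumes "f \<in> PS N"
  shows "ps_mult f (ps_const 1) = f"
proof
  fix \<alpha> :: "nat \<Rightarrow> nat"
  have key: "finite {\<beta>. \<beta> \<le> \<alpha>} \<Longrightarrow> ps_mult f (ps_const 1) \<alpha> = f \<alpha>"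
  proof -
    assume fin: "finite {\<beta>. \<beta> \<le> \<alpha>}"
    have "ps_mult f (ps_const 1) \<alpha> =
      (\<Sum>\<beta>\<in>{\<beta>. \<beta> \<le> \<alpha>}. if \<beta> = \<alpha> then f \<beta> else 0)"
      unfolding ps_mult_def ps_const_def
    proof (intro sum.cong refl)
      fix \<beta> assume "\<beta> \<in> {\<beta>. \<beta> \<le> \<alpha>}"
      hence "\<And>i. \<beta> i \<le> \<alpha> i" by (simp add: le_fun_def)
      hence "((\<lambda>i. \<alpha> i - \<beta> i) = (\<lambda>_. 0)) = (\<beta> = \<alpha>)"
        by (auto simp: fun_eq_iff) (metis diff_is_0_eq le_antisym)
      thus "f \<beta> * (if (\<lambda>i. \<alpha> i - \<beta> i) = (\<lambda>_. 0) then 1 else 0) = (if \<beta> = \<alpha> then f \<beta> else 0)"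
        by simp
    qed
    also have "\<dots> = f \<alpha>" using fin by (subst sum.delta) auto
    finally show ?thesis .
  qed
  show "ps_mult f (ps_const 1) \<alpha> = f \<alpha>"
  proof (cases "\<alpha> \<in> multi_idx N")
    case True thus ?thesis using key fin_le by blast
  next
    case False
    hence "f \<alpha> = 0" using assms unfolding PS_def by auto
    thus ?thesis using key by (cases "finite {\<beta>. \<beta> \<le> \<alpha>}") (auto simp: ps_mult_def)
  qed
qed

lemma one_right_pt: "f \<in> PS N \<Longrightarrow> ps_mult f (ps_const 1) \<alpha> = f \<alpha>"
  using ps_mult_one_right by metis

lemma pderiv_const[simp]: "ps_pderiv i (ps_const c) = (\<lambda>_. 0)"
  unfolding ps_pderiv_def ps_const_def by (auto simp: fun_eq_iff dest: fun_cong[of _ _ i])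

lemma pderiv_zero[simp]: "ps_pderiv i (\<lambda>_. 0) = (\<lambda>_. 0)"
  unfolding ps_pderiv_def by simp

lemma pderiv_X: "ps_pderiv i (X j) = (if i = j then ps_const 1 else (\<lambda>_. (0::'k::comm_ring_1)))"
proof -
  have "\<And>\<alpha>. (\<alpha>(i := Suc (\<alpha> i)) = (\<lambda>_. 0)(j := 1)) = (i = j \<and> \<alpha> = (\<lambda>_. 0))"
  proof
    fix \<alpha> :: "nat \<Rightarrow> nat"
    assume h: "\<alpha>(i := Suc (\<alpha> i)) = (\<lambda>_. 0)(j := 1)"
    have "i = j" using fun_cong[OF h, of i] by (auto split: if_splits)
    moreover have "\<alpha> = (\<lambda>_. 0)"
    proof
      fix k show "\<alpha> k = 0" using fun_cong[OF h, of k] \<open>i = j\<close> by (auto split: if_splits)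
    qed
    ultimately show "i = j \<and> \<alpha> = (\<lambda>_. 0)" by simp
  qed (auto simp: fun_eq_iff)
  thus ?thesis unfolding ps_pderiv_def X_def ps_const_def by (auto simp: fun_eq_iff)
qed

lemma X_at0: "X m (\<lambda>_::nat. 0::nat) = 0"
proof -
  have "(\<lambda>_::nat. 0::nat) \<noteq> (\<lambda>_. 0)(m := 1)"
  proof
    assume "(\<lambda>_::nat. 0::nat) = (\<lambda>_. 0)(m := 1)"
    from fun_cong[OF this, of m] show False by simp
  qed
  thus ?thesis unfolding X_def by simp
qed

lemma X_PS: "j < N \<Longrightarrow> X j \<in> PS N"
  unfolding X_def PS_def multi_idx_def by auto

lemma const_PS: "ps_const c \<in> PS N"
  unfolding ps_const_def PS_def multi_idx_def by auto

lemma zero_PS: "(\<lambda>_. 0) \<in> PS N"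
  unfolding PS_def by auto

lemma pderiv_PS: "f \<in> PS N \<Longrightarrow> ps_pderiv i f \<in> PS N"
proof -
  assume f: "f \<in> PS N"
  have "ps_pderiv i f \<alpha> = 0" if a: "\<alpha> \<notin> multi_idx N" for \<alpha>
  proof -
    from a obtain i' where i': "i' \<ge> N" "\<alpha> i' \<noteq> 0" unfolding multi_idx_def by auto
    have "(\<alpha>(i := \<alpha> i + 1)) i' \<noteq> 0" using i' by (cases "i' = i") auto
    hence "\<alpha>(i := \<alpha> i + 1) \<notin> multi_idx N" using i' unfolding multi_idx_def by auto
    hence "f (\<alpha>(i := \<alpha> i + 1)) = 0" using f unfolding PS_def by auto
    thus ?thesis unfolding ps_pderiv_def by simp
  qed
  thus ?thesis unfolding PS_def by auto
qed

lemma apply_sd: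
  assumes "j < n"
  shows "apply_der n (sd j f) g = ps_mult f (ps_pderiv j g)"
proof
  fix \<alpha>
  have "apply_der n (sd j f) g \<alpha> = (\<Sum>i<n. if i = j then ps_mult f (ps_pderiv j g) \<alpha> else 0)"
    unfolding apply_der_def sd_def by (intro sum.cong) auto
  also have "\<dots> = ps_mult f (ps_pderiv j g) \<alpha>" using assms by (subst sum.delta) auto
  finally show "apply_der n (sd j f) g \<alpha> = ps_mult f (ps_pderiv j g) \<alpha>" .
qed

lemma sd_Der: "j < n \<Longrightarrow> f \<in> PS n \<Longrightarrow> sd j f \<in> Der n"
  unfolding Der_def sd_def using zero_PS by auto

lemma div_sd: "j < n \<Longrightarrow> der_div n (sd j f) = ps_pderiv j f"
proof
  fix \<alpha> assume "j < n"
  have "der_div n (sd j f) \<alpha> = (\<Sum>i<n. if i = j then ps_pderiv j f \<alpha> else 0)"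
    unfolding der_div_def sd_def by (intro sum.cong) auto
  also have "\<dots> = ps_pderiv j f \<alpha>" using \<open>j < n\<close> by (subst sum.delta) auto
  finally show "der_div n (sd j f) \<alpha> = ps_pderiv j f \<alpha>" .
qed


lemma ps_const0: "ps_const 0 = (\<lambda>_. 0)"
  unfolding ps_const_def by auto

lemma Der_add: "(a::'k::comm_ring_1 der) \<in> Der n \<Longrightarrow> b \<in> Der n \<Longrightarrow> der_add a b \<in> Der n"
  unfolding Der_def PS_def der_add_def by auto

lemma Der_scale: "(a::'k::comm_ring_1 der) \<in> Der n \<Longrightarrow> der_scale c a \<in> Der n"
  unfolding Der_def PS_def der_scale_def by auto

lemma div_add: "der_div n (der_add a b) = (\<lambda>\<alpha>. der_div n a \<alpha> + der_div n (b::'k::comm_ring_1 der) \<alpha>)"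
  unfolding der_div_def der_add_def ps_pderiv_def by (simp add: sum.distrib distrib_left)

lemma div_scale: "der_div n (der_scale c a) = (\<lambda>\<alpha>. c * der_div n (a::'k::comm_ring_1 der) \<alpha>)"
  unfolding der_div_def der_scale_def ps_pderiv_def by (simp add: sum_distrib_left algebra_simps)

lemma Div0_Divc: "Div0 n \<subseteq> Divc n"
proof
  fix a assume "a \<in> Div0 n"
  hence "a \<in> Der n" "der_div n a = ps_const 0" unfolding Div0_def ps_const0 by auto
  thus "a \<in> Divc n" unfolding Divc_def by blast
qed

lemma pderiv_sd_const: "ps_pderiv i (sd j (ps_const c) l) = (\<lambda>_. 0)"
  unfolding sd_def by auto

lemma bracket_const:
  assumes "G \<in> Der n" "j < n"
  shows "der_bracket n G (sd j (ps_const 1)) = (\<lambda>l \<alpha>. - ps_pderiv j (G l) \<alpha>)"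
proof (intro ext)
  fix l \<alpha>
  have "apply_der n G (sd j (ps_const 1) l) \<alpha> = 0"
    unfolding apply_der_def pderiv_sd_const by simp
  moreover have "G l \<in> PS n" using assms unfolding Der_def by auto
  hence "apply_der n (sd j (ps_const 1)) (G l) \<alpha> = ps_pderiv j (G l) \<alpha>"
    unfolding apply_sd[OF assms(2)] ps_mult_const_left[OF pderiv_PS[OF \<open>G l \<in> PS n\<close>]] by simp
  ultimately show "der_bracket n G (sd j (ps_const 1)) l \<alpha> = - ps_pderiv j (G l) \<alpha>"
    unfolding der_bracket_def by simp
qed

lemma bracket_X_at0:
  assumes "G \<in> Der n" "m < n" "k < n"
  shows "der_bracket n G (sd k (X m)) k (\<lambda>_. 0) = G m (\<lambda>_. (0::nat))"
proof -
  have "apply_der n G (X m) (\<lambda>_. 0) = (\<Sum>i<n. if i = m then G m (\<lambda>_. 0) else 0)"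
    unfolding apply_der_def
    by (intro sum.cong) (auto simp: ps_mult_at0 pderiv_X ps_const_def)
  also have "\<dots> = G m (\<lambda>_. 0)" using assms by simp
  finally have 1: "apply_der n G (X m) (\<lambda>_. 0) = G m (\<lambda>_. 0)" .
  have "X m (\<lambda>_. 0::nat) = (0::'a)" unfolding X_def by (auto dest: fun_cong[of _ _ m])
  hence 2: "apply_der n (sd k (X m)) (G k) (\<lambda>_. 0) = 0"
    unfolding apply_sd[OF assms(3)] ps_mult_at0 by simp
  show ?thesis unfolding der_bracket_def using 1 2 by (simp add: sd_def)
qed

lemma bracket_sd:
  assumes "i < n" "k < n"
  shows "der_bracket n (sd i f) (sd k g) l \<alpha> =
    ps_mult f (ps_pderiv i (sd k g l)) \<alpha> - ps_mult g (ps_pderiv k (sd i f l)) \<alpha>"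
  unfolding der_bracket_def
  apply (subst apply_sd[OF assms(1)])
  apply (subst apply_sd[OF assms(2)])
  apply (rule refl)
  done

theorem lemma1p8:
  fixes n :: nat and \<sigma> :: "'k::field_char_0 der \<Rightarrow> 'k der"
  assumes "n \<ge> 2"
    and "Divc_aut n \<sigma>"
    and "\<forall>a\<in>Div0 n. \<sigma> a = a"
  shows "\<forall>a\<in>Divc n. \<sigma> a = a"
proof -
  have bij: "bij_betw \<sigma> (Divc n) (Divc n)"
    and add: "\<And>a b. a \<in> Divc n \<Longrightarrow> b \<in> Divc n \<Longrightarrow> \<sigma> (der_add a b) = der_add (\<sigma> a) (\<sigma> b)"
    and scl: "\<And>c a. a \<in> Divc n \<Longrightarrow> \<sigma> (der_scale c a) = der_scale c (\<sigma> a)"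
    and br: "\<And>a b. a \<in> Divc n \<Longrightarrow> b \<in> Divc n \<Longrightarrow> \<sigma> (der_bracket n a b) = der_bracket n (\<sigma> a) (\<sigma> b)"
    using assms(2) unfolding Divc_aut_def by auto
  have n0: "0 < n" and n1: "1 < n" using assms(1) by auto
  define E :: "'k der" where "E = sd 0 (X 0)"
  have EDer: "E \<in> Der n" unfolding E_def using sd_Der[OF n0 X_PS[OF n0]] .
  have Ediv: "der_div n E = ps_const 1" unfolding E_def div_sd[OF n0] pderiv_X by simp
  have EDivc: "E \<in> Divc n" unfolding Divc_def using EDer Ediv by auto
  define G where "G = \<sigma> E"
  have GDivc: "G \<in> Divc n" unfolding G_def using bij EDivc bij_betwE by blast
  hence GDer: "G \<in> Der n" unfolding Divc_def by auto
  have key: "der_bracket n G b = der_bracket n E b"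
    if b0: "b \<in> Div0 n" and lam: "der_bracket n E b = der_scale lam b" for b lam
  proof -
    have bc: "b \<in> Divc n" using b0 Div0_Divc by blast
    have "der_bracket n G b = \<sigma> (der_bracket n E b)"
      unfolding G_def using br[OF EDivc bc] assms(3) b0 by simp
    also have "\<dots> = der_scale lam (\<sigma> b)" using lam scl[OF bc] by simp
    also have "\<dots> = der_bracket n E b" using lam assms(3) b0 by simp
    finally show ?thesis .
  qed
  have step1: "ps_pderiv j (G l) \<alpha> = ps_pderiv j (E l) \<alpha>" if j: "j < n" for j l \<alpha>
  proof -
    let ?b = "sd j (ps_const (1::'k))"
    have b0: "?b \<in> Div0 n" unfolding Div0_def
      by (simp add: sd_Der[OF j const_PS] div_sd[OF j])
    have "der_bracket n E ?b = der_scale (if j = 0 then -1 else 0) ?b"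
      unfolding bracket_const[OF EDer j]
      by (auto simp: fun_eq_iff der_scale_def E_def sd_def pderiv_X)
    from key[OF b0 this] have h: "(\<lambda>l \<alpha>. - ps_pderiv j (G l) \<alpha>) = (\<lambda>l \<alpha>. - ps_pderiv j (E l) \<alpha>)"
      unfolding bracket_const[OF EDer j] bracket_const[OF GDer j] .
    show ?thesis using fun_cong[OF fun_cong[OF h, of l], of \<alpha>] by simp
  qed
  have step2: "G m (\<lambda>_. 0) = 0" if m: "m < n" for m
  proof -
    define k where "k = (if m = 0 then 1 else (0::nat))"
    have k: "k < n" "k \<noteq> m" unfolding k_def using n0 n1 by auto
    let ?b = "sd k (X m) :: 'k der"
    have b0: "?b \<in> Div0 n" unfolding Div0_def
      using k(2) by (simp add: sd_Der[OF k(1) X_PS[OF m]] div_sd[OF k(1)] pderiv_X)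
    have "der_bracket n E ?b = der_scale (if m = 0 then 1 else -1) ?b"
    proof (intro ext)
      fix l \<alpha>
      show "der_bracket n E ?b l \<alpha> = der_scale (if m = 0 then 1 else -1) ?b l \<alpha>"
        unfolding E_def bracket_sd[OF n0 k(1)]
        using k
        by (auto simp: k_def der_scale_def sd_def pderiv_X one_right_pt[OF X_PS[OF m]] one_right_pt[OF X_PS[OF n0]])
    qed
    from key[OF b0 this] have "der_bracket n G ?b k (\<lambda>_. 0) = der_bracket n E ?b k (\<lambda>_. 0)"
      by simp
    thus ?thesis unfolding bracket_X_at0[OF GDer m k(1)] bracket_X_at0[OF EDer m k(1)]
      by (simp add: E_def sd_def X_at0)
  qed
  have GE: "G = E"
  proof (intro ext)
    fix l and \<alpha> :: "nat \<Rightarrow> nat"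
    show "G l \<alpha> = E l \<alpha>"
    proof (cases "\<alpha> \<in> multi_idx n")
      case False
      have "G l \<in> PS n" "E l \<in> PS n" using GDer EDer unfolding Der_def by blast+
      hence "G l \<alpha> = 0" "E l \<alpha> = 0" using False unfolding PS_def by simp_all
      thus ?thesis by simp
    next
      case True
      show ?thesis
      proof (cases "\<alpha> = (\<lambda>_. 0)")
        case True
        show ?thesis
        proof (cases "l < n")
          case True thus ?thesis using step2 \<open>\<alpha> = _\<close> by (simp add: E_def sd_def X_at0)
        next
          case False
          have "\<forall>i\<ge>n. G i = (\<lambda>_. 0)" "\<forall>i\<ge>n. E i = (\<lambda>_. 0)"
            using GDer EDer unfolding Der_def by blast+
          thus ?thesis using False by simp
        qed
      next
        case False
        then obtain j where "\<alpha> j \<noteq> 0" by auto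
        have j: "j < n"
        proof (rule ccontr)
          assume "\<not> j < n"
          hence "\<alpha> j = 0" using True unfolding multi_idx_def by simp
          thus False using \<open>\<alpha> j \<noteq> 0\<close> by simp
        qed
        define \<beta> where "\<beta> = \<alpha>(j := \<alpha> j - 1)"
        have "\<beta>(j := \<beta> j + 1) = \<alpha>" unfolding \<beta>_def using \<open>\<alpha> j \<noteq> 0\<close> by auto
        moreover have "of_nat (\<beta> j + 1) \<noteq> (0::'k)" by (simp del: of_nat_Suc)
        moreover note step1[OF j, of l \<beta>]
        ultimately show ?thesis unfolding ps_pderiv_def by simp
      qed
    qed
  qed
  show ?thesis
  proof
    fix a :: "'k der" assume a: "a \<in> Divc n"
    then obtain c where c: "der_div n a = ps_const c" and aD: "a \<in> Der n" unfolding Divc_def by auto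
    define a' where "a' = der_add a (der_scale (-c) E)"
    define sE where "sE = der_scale c E"
    have a'D: "a' \<in> Der n" unfolding a'_def using Der_add Der_scale aD EDer by blast
    have "der_div n a' = (\<lambda>_. 0)" unfolding a'_def div_add div_scale c Ediv
      by (auto simp: ps_const_def fun_eq_iff)
    hence a'0: "a' \<in> Div0 n" using a'D unfolding Div0_def by auto
    hence a'c: "a' \<in> Divc n" using Div0_Divc by blast
    have "der_div n sE = ps_const c" unfolding sE_def div_scale Ediv
      by (simp add: ps_const_def fun_eq_iff)
    hence sEc: "sE \<in> Divc n" unfolding Divc_def sE_def using Der_scale[OF EDer] by auto
    have "a = der_add a' sE" unfolding a'_def sE_def der_add_def der_scale_def
      by (auto simp: fun_eq_iff algebra_simps)
    hence "\<sigma> a = der_add (\<sigma> a') (\<sigma> sE)" using add[OF a'c sEc] by simp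
    also have "\<dots> = der_add a' sE" unfolding sE_def using scl[OF EDivc] GE G_def assms(3) a'0 by simp
    finally show "\<sigma> a = a" using \<open>a = der_add a' sE\<close> by simp
  qed
qed

end
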